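(* Let $(\mathcal{X},d)$ be a finite metric space, $\mu\in\mathcal{M}_+(\mathcal{X})$ with $\mathbb{M}(\mu)>0$, $N\in\mathbb{N}$, and let $\hat\mu_N$ be the multinomial-model estimator. Then for every $p\ge1$, $C>0$, $$\mathbb{E}\big[\mathrm{KR}^p_{p,C}(\hat\mu_N,\mu)\big]\le\Big(\frac{C^p}{2}\sqrt{\mathbb{M}(\mu)}\sum_{x\in\mathcal{X}}\sqrt{\mu(x)}\Big)N^{-1/2}.$$
   Context: $\mathcal{M}_+(\mathcal{X})$ non-negative measures on finite $\mathcal{X}$, $\mathbb{M}(\mu)=\sum_x\mu(x)$. $\mathrm{KR}_{p,C}(\mu,\nu)=\big(\min_{\pi\in\Pi_\le(\mu,\nu)}\sum_{x,x'}d^p(x,x')\pi(x,x')+C^p(\frac{\mathbb{M}(\mu)+\mathbb{M}(\nu)}2-\mathbb{M}(\pi))\big)^{1/p}$ with $\Pi_\le(\mu,\nu)=\{\pi\in\mathcal{M}_+(\mathcal{X}\times\mathcal{X}):\sum_{x'}\pi(x,x')\le\mu(x),\sum_x\pi(x,x')\le\nu(x')\}$. Multinomial model: $X_1,\dots,X_N$ i.i.d. with law $\mu/\mathbb{M}(\mu)$ and $\hat\mu_N=\frac{\mathbb{M}(\mu)}{N}\sum_{x\in\mathcal{X}}|\{k:X_k=x\}|\,\delta_x$. *)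

theory Defs
  imports "HOL-Probability.Probability"
begin

definition is_metric :: "('a \<Rightarrow> 'a \<Rightarrow> real) \<Rightarrow> bool" where
  "is_metric d \<longleftrightarrow> (\<forall>x y. d x y \<ge> 0) \<and> (\<forall>x y. d x y = 0 \<longleftrightarrow> x = y)
      \<and> (\<forall>x y. d x y = d y x) \<and> (\<forall>x y z. d x z \<le> d x y + d y z)"

definition nonneg_measure :: "('a::finite \<Rightarrow> real) \<Rightarrow> bool" where
  "nonneg_measure \<mu> \<longleftrightarrow> (\<forall>x. \<mu> x \<ge> 0)"

definition mass :: "('a::finite \<Rightarrow> real) \<Rightarrow> real" where
  "mass \<mu> = (\<Sum>x\<in>UNIV. \<mu> x)"

definition subcouplings :: "('a::finite \<Rightarrow> real) \<Rightarrow> ('a \<Rightarrow> real) \<Rightarrow> ('a \<times> 'a \<Rightarrow> real) set" where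
  "subcouplings \<mu> \<nu> = {\<pi>. (\<forall>z. \<pi> z \<ge> 0) \<and> (\<forall>x. (\<Sum>x'\<in>UNIV. \<pi> (x, x')) \<le> \<mu> x)
                          \<and> (\<forall>x'. (\<Sum>x\<in>UNIV. \<pi> (x, x')) \<le> \<nu> x')}"

definition KR_cost :: "('a::finite \<Rightarrow> 'a \<Rightarrow> real) \<Rightarrow> real \<Rightarrow> real \<Rightarrow> ('a \<Rightarrow> real) \<Rightarrow> ('a \<Rightarrow> real)
      \<Rightarrow> ('a \<times> 'a \<Rightarrow> real) \<Rightarrow> real" where
  "KR_cost d p C \<mu> \<nu> \<pi> = (\<Sum>(x, x')\<in>UNIV. d x x' powr p * \<pi> (x, x'))
      + C powr p * ((mass \<mu> + mass \<nu>) / 2 - (\<Sum>z\<in>UNIV. \<pi> z))"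

text \<open>Kantorovich-Rubinstein distance KR_{p,C}; the minimum is attained, written as Inf.\<close>
definition KR :: "('a::finite \<Rightarrow> 'a \<Rightarrow> real) \<Rightarrow> real \<Rightarrow> real \<Rightarrow> ('a \<Rightarrow> real) \<Rightarrow> ('a \<Rightarrow> real) \<Rightarrow> real" where
  "KR d p C \<mu> \<nu> = (INF \<pi>\<in>subcouplings \<mu> \<nu>. KR_cost d p C \<mu> \<nu> \<pi>) powr (1 / p)"

definition law_pmf :: "('a::finite \<Rightarrow> real) \<Rightarrow> 'a pmf" where
  "law_pmf \<mu> = embed_pmf (\<lambda>x. \<mu> x / mass \<mu>)"

definition sample_pmf :: "('a::finite \<Rightarrow> real) \<Rightarrow> nat \<Rightarrow> (nat \<Rightarrow> 'a) pmf" where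
  "sample_pmf \<mu> N = Pi_pmf {..<N} undefined (\<lambda>_. law_pmf \<mu>)"

definition emp_est :: "('a::finite \<Rightarrow> real) \<Rightarrow> nat \<Rightarrow> (nat \<Rightarrow> 'a) \<Rightarrow> 'a \<Rightarrow> real" where
  "emp_est \<mu> N X = (\<lambda>x. mass \<mu> / real N * real (card {k\<in>{..<N}. X k = x}))"

end

theory Submission
  imports Defs
begin

lemma jensen_abs:
  fixes P :: "'b pmf" and f :: "'b \<Rightarrow> real"
  assumes fin: "finite (set_pmf P)"
  shows "measure_pmf.expectation P (\<lambda>X. \<bar>f X\<bar>) \<le> sqrt (measure_pmf.expectation P (\<lambda>X. (f X)^2))"
proof -
  note int = integrable_measure_pmf_finite[OF fin]
  define m where "m = measure_pmf.expectation P (\<lambda>X. \<bar>f X\<bar>)"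
  have "0 \<le> measure_pmf.expectation P (\<lambda>X. (\<bar>f X\<bar> - m)^2)"
    by (intro Bochner_Integration.integral_nonneg) auto
  also have "(\<lambda>X. (\<bar>f X\<bar> - m)^2) = (\<lambda>X. (f X)^2 - 2 * m * \<bar>f X\<bar> + m^2)"
    by (auto simp: power2_eq_square algebra_simps)
  also have "measure_pmf.expectation P \<dots> = measure_pmf.expectation P (\<lambda>X. (f X)^2) - 2 * m * m + m^2"
    by (simp add: int m_def)
  finally have "m^2 \<le> measure_pmf.expectation P (\<lambda>X. (f X)^2)" by (simp add: power2_eq_square)
  then show ?thesis unfolding m_def by (simp add: real_le_rsqrt)
qed

lemma law_pmf_pmf:
  assumes "nonneg_measure \<mu>" "mass \<mu> > 0"
  shows "pmf (law_pmf \<mu>) x = \<mu> x / mass \<mu>"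
proof -
  have nn: "\<And>x. 0 \<le> \<mu> x / mass \<mu>" using assms by (simp add: nonneg_measure_def)
  have "(\<integral>\<^sup>+x. ennreal (\<mu> x / mass \<mu>) \<partial>count_space UNIV) = (\<Sum>x\<in>UNIV. ennreal (\<mu> x / mass \<mu>))"
    by (simp add: nn_integral_count_space_finite)
  also have "\<dots> = ennreal (\<Sum>x\<in>UNIV. \<mu> x / mass \<mu>)"
    using nn by (simp add: sum_ennreal)
  also have "(\<Sum>x\<in>UNIV. \<mu> x / mass \<mu>) = 1"
    using assms by (simp add: sum_divide_distrib[symmetric] mass_def)
  finally show ?thesis unfolding law_pmf_def
    using pmf_embed_pmf[of "\<lambda>x. \<mu> x / mass \<mu>"] nn by simp
qed

lemma fin_sample: "finite (set_pmf (sample_pmf \<mu> N))"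
  unfolding sample_pmf_def by (subst set_Pi_pmf) auto

lemma exp_ind_law:
  "measure_pmf.expectation P (\<lambda>v. if v = x then 1 else 0 :: real) = pmf P x"
  by (subst integral_measure_pmf_real[of "{x}"]) (auto split: if_splits)


lemma exp_ind1:
  assumes "k < N"
  shows "measure_pmf.expectation (sample_pmf \<mu> N) (\<lambda>X. if X k = x then 1 else 0 :: real)
         = pmf (law_pmf \<mu>) x"
proof -
  define f where "f = (\<lambda>i v. if i = k then (if v = x then 1 else 0) else 1 :: real)"
  have "(\<lambda>X. if X k = x then 1 else 0 :: real) = (\<lambda>X. \<Prod>i\<in>{..<N}. f i (X i))"
    using assms by (auto simp: f_def prod.If_cases Int_absorb1 cong: if_cong)
  moreover have "measure_pmf.expectation (sample_pmf \<mu> N) (\<lambda>X. \<Prod>i\<in>{..<N}. f i (X i))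
     = (\<Prod>i\<in>{..<N}. measure_pmf.expectation (law_pmf \<mu>) (f i))"
    unfolding sample_pmf_def
    by (rule expectation_prod_Pi_pmf) (auto simp: f_def intro!: integrable_measure_pmf_finite)
  moreover have "(\<Prod>i\<in>{..<N}. measure_pmf.expectation (law_pmf \<mu>) (f i)) = 
       (\<Prod>i\<in>{k}. measure_pmf.expectation (law_pmf \<mu>) (f i))"
    using assms by (intro prod.mono_neutral_right) (auto simp: f_def)
  moreover have "\<dots> = pmf (law_pmf \<mu>) x"
    using assms by (simp add: f_def exp_ind_law)
  ultimately show ?thesis by simp
qed

lemma exp_ind2:
  assumes "k < N" "j < N" "j \<noteq> k"
  shows "measure_pmf.expectation (sample_pmf \<mu> N) (\<lambda>X. (if X j = x then 1 else 0 :: real) * (if X k = x then 1 else 0))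
         = (pmf (law_pmf \<mu>) x)^2"
proof -
  define f where "f = (\<lambda>i v. if i = k \<or> i = j then (if v = x then 1 else 0) else 1 :: real)"
  have "(\<lambda>X. (if X j = x then 1 else 0 :: real) * (if X k = x then 1 else 0)) = (\<lambda>X. \<Prod>i\<in>{..<N}. f i (X i))"
  proof
    fix X
    have "(\<Prod>i\<in>{..<N}. f i (X i)) = (\<Prod>i\<in>{k,j}. f i (X i))"
      using assms by (intro prod.mono_neutral_right) (auto simp: f_def)
    then show "(if X j = x then 1 else 0 :: real) * (if X k = x then 1 else 0) = (\<Prod>i\<in>{..<N}. f i (X i))"
      using assms by (simp add: f_def)
  qed
  moreover have "measure_pmf.expectation (sample_pmf \<mu> N) (\<lambda>X. \<Prod>i\<in>{..<N}. f i (X i))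
     = (\<Prod>i\<in>{..<N}. measure_pmf.expectation (law_pmf \<mu>) (f i))"
    unfolding sample_pmf_def
    by (rule expectation_prod_Pi_pmf) (auto simp: f_def intro!: integrable_measure_pmf_finite)
  moreover have "(\<Prod>i\<in>{..<N}. measure_pmf.expectation (law_pmf \<mu>) (f i)) = 
       (\<Prod>i\<in>{k,j}. measure_pmf.expectation (law_pmf \<mu>) (f i))"
    using assms by (intro prod.mono_neutral_right) (auto simp: f_def)
  moreover have "\<dots> = (pmf (law_pmf \<mu>) x)^2"
    using assms by (simp add: f_def exp_ind_law power2_eq_square)
  ultimately show ?thesis by simp
qed


lemma second_moment:
  fixes a b :: real and \<mu> :: "'a::finite \<Rightarrow> real" and x :: 'a and N :: nat and q :: real
  defines "q \<equiv> pmf (law_pmf \<mu>) x"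
  shows "measure_pmf.expectation (sample_pmf \<mu> N)
     (\<lambda>X. (a * (\<Sum>k<N. if X k = x then 1 else 0) - b)^2)
     = a^2 * (real N * q + real N * (real N - 1) * q^2) - 2 * a * b * real N * q + b^2"
proof -
  let ?P = "sample_pmf \<mu> N"
  let ?I = "\<lambda>k X. if X k = x then 1 else 0 :: real"
  note int = integrable_measure_pmf_finite[OF fin_sample]
  have E1: "measure_pmf.expectation ?P (\<lambda>X. \<Sum>k<N. ?I k X) = N * q"
    by (subst Bochner_Integration.integral_sum) (auto simp: int exp_ind1 q_def)
  have E2j: "measure_pmf.expectation ?P (\<lambda>X. \<Sum>k<N. ?I j X * ?I k X) = q + (real N - 1) * q^2"
    if j: "j < N" for j
  proof -
    have "measure_pmf.expectation ?P (\<lambda>X. \<Sum>k<N. ?I j X * ?I k X)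
        = (\<Sum>k<N. measure_pmf.expectation ?P (\<lambda>X. ?I j X * ?I k X))"
      by (subst Bochner_Integration.integral_sum) (auto simp: int)
    also have "\<dots> = (\<Sum>k<N. q^2 + (if k = j then q - q^2 else 0))"
    proof (intro sum.cong refl)
      fix k assume k: "k \<in> {..<N}"
      show "measure_pmf.expectation ?P (\<lambda>X. ?I j X * ?I k X) = q^2 + (if k = j then q - q^2 else 0)"
      proof (cases "k = j")
        case True
        have "(\<lambda>X. ?I j X * ?I k X) = ?I k" using True by auto
        then show ?thesis using True k exp_ind1[of k N \<mu> x] by (simp add: q_def)
      next
        case False
        then show ?thesis using k j exp_ind2[of k N j \<mu> x] by (simp add: q_def)
      qed
    qed
    also have "\<dots> = N * q^2 + (q - q^2)"
      using j by (simp add: sum.distrib)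
    finally show ?thesis using j by (simp add: algebra_simps of_nat_diff)
  qed
  have sq: "(\<Sum>k<N. ?I k X)^2 = (\<Sum>j<N. \<Sum>k<N. ?I j X * ?I k X)" for X
    by (simp add: power2_eq_square sum_product)
  have E2: "measure_pmf.expectation ?P (\<lambda>X. (\<Sum>k<N. ?I k X)^2) = real N * (q + (real N - 1) * q^2)"
  proof -
    have "measure_pmf.expectation ?P (\<lambda>X. (\<Sum>k<N. ?I k X)^2)
       = (\<Sum>j<N. measure_pmf.expectation ?P (\<lambda>X. \<Sum>k<N. ?I j X * ?I k X))"
      unfolding sq by (rule Bochner_Integration.integral_sum) (auto simp: int)
    also have "\<dots> = (\<Sum>j<N. q + (real N - 1) * q^2)"
      by (intro sum.cong refl) (auto simp: E2j simp del: of_nat_diff)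
    finally show ?thesis by simp
  qed
  define S where "S = (\<lambda>X. \<Sum>k<N. ?I k X)"
  have expand: "(\<lambda>X. (a * (\<Sum>k<N. ?I k X) - b)^2) =
      (\<lambda>X. a^2 * (S X)^2 - 2 * a * b * S X + b^2)"
    by (auto simp: power2_eq_square algebra_simps S_def)
  have E1': "measure_pmf.expectation ?P S = N * q" using E1 by (simp add: S_def)
  have E2': "measure_pmf.expectation ?P (\<lambda>X. (S X)^2) = real N * (q + (real N - 1) * q^2)"
    using E2 by (simp add: S_def)
  show ?thesis unfolding expand
    by (simp add: int E1' E2', simp add: algebra_simps power2_eq_square)
qed


lemma sum_pairs: "(\<Sum>z\<in>(UNIV::('a::finite \<times> 'a) set). f z) = (\<Sum>x\<in>UNIV. \<Sum>y\<in>UNIV. f (x, y))"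
proof -
  have "(\<Sum>z\<in>(UNIV::('a \<times> 'a) set). f z) = (\<Sum>z\<in>UNIV \<times> UNIV. f z)" by simp
  also have "\<dots> = (\<Sum>x\<in>UNIV. \<Sum>y\<in>UNIV. f (x, y))" by (simp add: sum.cartesian_product)
  finally show ?thesis .
qed

lemma cost_nonneg:
  assumes "is_metric d" "\<pi> \<in> subcouplings e \<mu>" and that: "C > 0"
  shows "0 \<le> KR_cost d p C e \<mu> \<pi>"
proof -
  have pn: "\<And>z. 0 \<le> \<pi> z" and r: "\<And>x. (\<Sum>x'\<in>UNIV. \<pi> (x, x')) \<le> e x"
    and c: "\<And>x'. (\<Sum>x\<in>UNIV. \<pi> (x, x')) \<le> \<mu> x'"
    using assms(2) by (auto simp: subcouplings_def)
  have "(\<Sum>z\<in>UNIV. \<pi> z) \<le> mass e"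
    unfolding sum_pairs mass_def by (intro sum_mono r)
  moreover have "(\<Sum>z\<in>UNIV. \<pi> z) \<le> mass \<mu>"
    unfolding sum_pairs mass_def by (subst sum.swap) (intro sum_mono c)
  ultimately have "0 \<le> C powr p * ((mass e + mass \<mu>) / 2 - (\<Sum>z\<in>UNIV. \<pi> z))"
    using that by (intro mult_nonneg_nonneg) auto
  moreover have "0 \<le> (\<Sum>(x, x')\<in>UNIV. d x x' powr p * \<pi> (x, x'))"
    by (intro sum_nonneg) (auto simp: pn)
  ultimately show ?thesis unfolding KR_cost_def by linarith
qed

lemma KR_bound:
  assumes "is_metric d" "\<And>x. 0 \<le> e x" "nonneg_measure \<mu>" "p \<ge> 1" "C > 0"
  shows "KR d p C e \<mu> powr p \<le> C powr p / 2 * (\<Sum>x\<in>UNIV. \<bar>e x - \<mu> x\<bar>)"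
proof -
  define \<pi>0 where "\<pi>0 = (\<lambda>(x, y). if x = y then min (e x) (\<mu> x) else 0)"
  have mu: "\<And>x. 0 \<le> \<mu> x" using assms(3) by (simp add: nonneg_measure_def)
  have row: "(\<Sum>y\<in>UNIV. \<pi>0 (x, y)) = min (e x) (\<mu> x)" for x
    by (simp add: \<pi>0_def)
  have col: "(\<Sum>x\<in>UNIV. \<pi>0 (x, y)) = min (e y) (\<mu> y)" for y
    by (simp add: \<pi>0_def)
  have mem: "\<pi>0 \<in> subcouplings e \<mu>"
    unfolding subcouplings_def using assms(2) mu
    by (auto simp: row col) (auto simp: \<pi>0_def)
  have d0: "d x x = 0" for x using assms(1) by (simp add: is_metric_def)
  have "(\<Sum>(x, x')\<in>UNIV. d x x' powr p * \<pi>0 (x, x')) = 0"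
    by (intro sum.neutral) (auto simp: \<pi>0_def d0 split: prod.splits)
  moreover have "(\<Sum>z\<in>UNIV. \<pi>0 z) = (\<Sum>x\<in>UNIV. min (e x) (\<mu> x))"
    unfolding sum_pairs row ..
  moreover have "(mass e + mass \<mu>) / 2 - (\<Sum>x\<in>UNIV. min (e x) (\<mu> x)) = (\<Sum>x\<in>UNIV. \<bar>e x - \<mu> x\<bar>) / 2"
  proof -
    have "(\<Sum>x\<in>UNIV. (e x + \<mu> x) / 2 - min (e x) (\<mu> x)) = (\<Sum>x\<in>UNIV. \<bar>e x - \<mu> x\<bar> / 2)"
      by (intro sum.cong refl) (auto simp: min_def)
    then show ?thesis
      by (simp add: mass_def sum_subtractf sum_divide_distrib[symmetric] sum.distrib)
  qed
  ultimately have cost0: "KR_cost d p C e \<mu> \<pi>0 = C powr p / 2 * (\<Sum>x\<in>UNIV. \<bar>e x - \<mu> x\<bar>)"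
    unfolding KR_cost_def by simp
  define I where "I = (INF \<pi>\<in>subcouplings e \<mu>. KR_cost d p C e \<mu> \<pi>)"
  have bdd: "bdd_below ((\<lambda>\<pi>. KR_cost d p C e \<mu> \<pi>) ` subcouplings e \<mu>)"
    using cost_nonneg[OF assms(1) _ assms(5)] by (intro bdd_belowI[of _ 0]) auto
  have I0: "0 \<le> I" unfolding I_def
    using mem cost_nonneg[OF assms(1) _ assms(5)] by (intro cINF_greatest) auto
  have Ile: "I \<le> KR_cost d p C e \<mu> \<pi>0" unfolding I_def
    using mem bdd by (intro cINF_lower) auto
  have "KR d p C e \<mu> powr p = I"
    unfolding KR_def I_def[symmetric] using assms(4) I0
    by (simp add: powr_powr)
  then show ?thesis using Ile cost0 by simp
qed


lemma card_sum: "real (card {k\<in>{..<(N::nat)}. P k}) = (\<Sum>k<N. if P k then 1 else 0)"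
proof -
  have "real (card {k\<in>{..<N}. P k}) = (\<Sum>k\<in>{k\<in>{..<N}. P k}. 1)" by (rule real_of_card)
  also have "\<dots> = (\<Sum>k<N. if P k then 1 else 0)" by (rule sum.inter_filter) simp
  finally show ?thesis .
qed

lemma alg:
  fixes M q n :: real assumes "M > 0" "n > 0"
  shows "(M/n)^2 * (n * q + n * (n - 1) * q^2) - 2 * (M/n) * (M*q) * n * q + (M*q)^2 = M * (M*q) / n - (M*q)^2 / n"
  using assms by (simp add: field_simps power2_eq_square)

lemma per_point:
  assumes "nonneg_measure \<mu>" "mass \<mu> > 0" "N \<ge> 1"
  shows "measure_pmf.expectation (sample_pmf \<mu> N) (\<lambda>X. \<bar>emp_est \<mu> N X x - \<mu> x\<bar>)
    \<le> sqrt (mass \<mu>) * sqrt (\<mu> x) * real N powr (-1/2)"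
proof -
  define M where "M = mass \<mu>"
  define q where "q = pmf (law_pmf \<mu>) x"
  have qd: "q = \<mu> x / M" using law_pmf_pmf[OF assms(1,2)] by (simp add: q_def M_def)
  have mx: "0 \<le> \<mu> x" using assms(1) by (simp add: nonneg_measure_def)
  have Mp: "M > 0" using assms(2) by (simp add: M_def)
  have Np: "real N > 0" using assms(3) by simp
  have eq: "emp_est \<mu> N X x - \<mu> x = (M / N) * (\<Sum>k<N. if X k = x then 1 else 0) - \<mu> x" for X
    by (simp only: emp_est_def card_sum M_def)
  have J: "measure_pmf.expectation (sample_pmf \<mu> N) (\<lambda>X. \<bar>emp_est \<mu> N X x - \<mu> x\<bar>)
     \<le> sqrt (measure_pmf.expectation (sample_pmf \<mu> N) (\<lambda>X. (emp_est \<mu> N X x - \<mu> x)^2))"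
    by (rule jensen_abs[OF fin_sample])
  have "measure_pmf.expectation (sample_pmf \<mu> N) (\<lambda>X. (emp_est \<mu> N X x - \<mu> x)^2)
      = measure_pmf.expectation (sample_pmf \<mu> N) (\<lambda>X. ((M / N) * (\<Sum>k<N. if X k = x then 1 else 0) - \<mu> x)^2)"
    by (simp only: eq)
  also have "\<dots> = (M/N)^2 * (real N * q + real N * (real N - 1) * q^2) - 2 * (M/N) * \<mu> x * real N * q + (\<mu> x)^2"
    unfolding q_def by (rule second_moment)
  also have "\<dots> = M * \<mu> x / N - (\<mu> x)^2 / N"
  proof -
    have mq: "\<mu> x = M * q" using qd Mp by simp
    show ?thesis unfolding mq by (rule alg[OF Mp Np])
  qed
  also have "\<dots> \<le> M * \<mu> x / N" by simp
  finally have V: "measure_pmf.expectation (sample_pmf \<mu> N) (\<lambda>X. (emp_est \<mu> N X x - \<mu> x)^2) \<le> M * \<mu> x / N" .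
  have S: "sqrt (M * \<mu> x / N) = sqrt M * sqrt (\<mu> x) * real N powr (-1/2)"
  proof -
    have "real N powr (-1/2) = inverse (real N powr (1/2))" using powr_minus[of "real N" "1/2"] by simp
    also have "real N powr (1/2) = sqrt (real N)" using Np by (simp add: powr_half_sqrt)
    finally have "real N powr (-1/2) = inverse (sqrt (real N))" .
    moreover have "sqrt (M * \<mu> x / N) = sqrt M * sqrt (\<mu> x) / sqrt (real N)"
      by (simp only: real_sqrt_divide real_sqrt_mult)
    ultimately show ?thesis by (simp only: divide_inverse)
  qed
  show ?thesis using J real_sqrt_le_mono[OF V] S unfolding M_def by linarith
qed
theorem lemmaA1:
  fixes d :: "'a::finite \<Rightarrow> 'a \<Rightarrow> real" and \<mu> :: "'a \<Rightarrow> real"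
    and N :: nat and p C :: real
  assumes "is_metric d" and "nonneg_measure \<mu>" and "mass \<mu> > 0"
    and "N \<ge> 1" and "p \<ge> 1" and "C > 0"
  shows "measure_pmf.expectation (sample_pmf \<mu> N) (\<lambda>X. KR d p C (emp_est \<mu> N X) \<mu> powr p)
    \<le> (C powr p / 2 * sqrt (mass \<mu>) * (\<Sum>x\<in>UNIV. sqrt (\<mu> x))) * real N powr (-1/2)"
proof -
  let ?P = "sample_pmf \<mu> N"
  note int = integrable_measure_pmf_finite[OF fin_sample]
  have enn: "0 \<le> emp_est \<mu> N X x" for X x
    using assms(3) by (simp add: emp_est_def)
  have "measure_pmf.expectation ?P (\<lambda>X. KR d p C (emp_est \<mu> N X) \<mu> powr p)
     \<le> measure_pmf.expectation ?P (\<lambda>X. C powr p / 2 * (\<Sum>x\<in>UNIV. \<bar>emp_est \<mu> N X x - \<mu> x\<bar>))"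
    by (rule integral_mono[OF int int]) (rule KR_bound[OF assms(1) enn assms(2,5,6)])
  also have "\<dots> = C powr p / 2 * (\<Sum>x\<in>UNIV. measure_pmf.expectation ?P (\<lambda>X. \<bar>emp_est \<mu> N X x - \<mu> x\<bar>))"
    by (subst Bochner_Integration.integral_mult_right_zero)
       (subst Bochner_Integration.integral_sum, auto simp: int)
  also have "\<dots> \<le> C powr p / 2 * (\<Sum>x\<in>UNIV. sqrt (mass \<mu>) * sqrt (\<mu> x) * real N powr (-1/2))"
    using assms(6) by (intro mult_left_mono sum_mono per_point[OF assms(2,3,4)]) auto
  also have "\<dots> = (C powr p / 2 * sqrt (mass \<mu>) * (\<Sum>x\<in>UNIV. sqrt (\<mu> x))) * real N powr (-1/2)"
    by (simp add: sum_distrib_left sum_distrib_right mult.assoc mult.left_commute)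
  finally show ?thesis .
qed

end
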